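(* Let $L=L_1\times\cdots\times L_k$ where each $L_i$ ($i=1,\dots,k$) is a $C$-lattice. If $q_i$ is a quasi $n_i$-absorbing element of $L_i$ for all $i=1,\dots,k$, then $(q_1,\dots,q_k)$ is a quasi $m$-absorbing element of $L$, where $m=\max\{n_1,\dots,n_k\}+1$.
   Context: A multiplicative lattice is a complete lattice with least element $0$ and compact greatest element $1$, equipped with a commutative, associative product that distributes over arbitrary joins and has $1$ as multiplicative identity. An element $a$ is compact if $a\le\bigvee_{\alpha\in I}a_\alpha$ implies $a\le\bigvee_{\alpha\in I_0}a_\alpha$ for some finite $I_0\subseteq I$. A $C$-lattice is a multiplicative lattice generated under joins by a multiplicatively closed set of compact elements. $L_1\times\cdots\times L_k$ carries the componentwise order and product. $a^0=1$. For a positive integer $t$, a proper element $q$ ($q<1$) of a multiplicative lattice $M$ is quasi $t$-absorbing if whenever $a^tb\le q$ for some compact $a,b\in M$, then $a^t\le q$ or $a^{t-1}b\le q$. *)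

theory Defs
  imports "HOL-Library.FuncSet"
begin

text \<open>A lattice with multiplication, given on an explicit carrier set inside an
ambient type, so that a family of possibly different lattices can be handled.\<close>

record 'a mlat =
  carrier :: "'a set"
  le :: "'a \<Rightarrow> 'a \<Rightarrow> bool"
  mul :: "'a \<Rightarrow> 'a \<Rightarrow> 'a"

definition is_join :: "'a mlat \<Rightarrow> 'a set \<Rightarrow> 'a \<Rightarrow> bool" where
  "is_join L S x \<longleftrightarrow> x \<in> carrier L \<and> (\<forall>s\<in>S. le L s x) \<and>
     (\<forall>y\<in>carrier L. (\<forall>s\<in>S. le L s y) \<longrightarrow> le L x y)"

definition join :: "'a mlat \<Rightarrow> 'a set \<Rightarrow> 'a" where
  "join L S = (THE x. is_join L S x)"

definition top_el :: "'a mlat \<Rightarrow> 'a" where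
  "top_el L = join L (carrier L)"

definition bot_el :: "'a mlat \<Rightarrow> 'a" where
  "bot_el L = join L {}"

definition complete_lat :: "'a mlat \<Rightarrow> bool" where
  "complete_lat L \<longleftrightarrow>
     (\<forall>x\<in>carrier L. le L x x) \<and>
     (\<forall>x\<in>carrier L. \<forall>y\<in>carrier L. le L x y \<and> le L y x \<longrightarrow> x = y) \<and>
     (\<forall>x\<in>carrier L. \<forall>y\<in>carrier L. \<forall>z\<in>carrier L. le L x y \<and> le L y z \<longrightarrow> le L x z) \<and>
     (\<forall>S. S \<subseteq> carrier L \<longrightarrow> (\<exists>x. is_join L S x))"

definition compact :: "'a mlat \<Rightarrow> 'a \<Rightarrow> bool" where
  "compact L a \<longleftrightarrow> a \<in> carrier L \<and>
     (\<forall>S. S \<subseteq> carrier L \<longrightarrow> le L a (join L S) \<longrightarrow>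
        (\<exists>F. F \<subseteq> S \<and> finite F \<and> le L a (join L F)))"

definition mult_lattice :: "'a mlat \<Rightarrow> bool" where
  "mult_lattice L \<longleftrightarrow> complete_lat L \<and>
     compact L (top_el L) \<and>
     (\<forall>a\<in>carrier L. \<forall>b\<in>carrier L. mul L a b \<in> carrier L) \<and>
     (\<forall>a\<in>carrier L. \<forall>b\<in>carrier L. mul L a b = mul L b a) \<and>
     (\<forall>a\<in>carrier L. \<forall>b\<in>carrier L. \<forall>c\<in>carrier L. mul L (mul L a b) c = mul L a (mul L b c)) \<and>
     (\<forall>a\<in>carrier L. \<forall>S. S \<subseteq> carrier L \<longrightarrow> mul L a (join L S) = join L (mul L a ` S)) \<and>
     (\<forall>a\<in>carrier L. mul L (top_el L) a = a)"

definition C_lattice :: "'a mlat \<Rightarrow> bool" where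
  "C_lattice L \<longleftrightarrow> mult_lattice L \<and>
     (\<exists>C. C \<subseteq> carrier L \<and> (\<forall>c\<in>C. compact L c) \<and>
          (\<forall>c\<in>C. \<forall>d\<in>C. mul L c d \<in> C) \<and>
          (\<forall>a\<in>carrier L. \<exists>S. S \<subseteq> C \<and> a = join L S))"

primrec mpow :: "'a mlat \<Rightarrow> 'a \<Rightarrow> nat \<Rightarrow> 'a" where
  "mpow L a 0 = top_el L"
| "mpow L a (Suc n) = mul L a (mpow L a n)"

definition quasi_absorbing :: "'a mlat \<Rightarrow> nat \<Rightarrow> 'a \<Rightarrow> bool" where
  "quasi_absorbing L t q \<longleftrightarrow> 0 < t \<and> q \<in> carrier L \<and> q \<noteq> top_el L \<and>
     (\<forall>a b. compact L a \<longrightarrow> compact L b \<longrightarrow>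
        le L (mul L (mpow L a t) b) q \<longrightarrow>
        le L (mpow L a t) q \<or> le L (mul L (mpow L a (t - 1)) b) q)"

text \<open>Product L_0 x ... x L_(k-1) with componentwise order and product;
elements are extensional functions on {..<k}.\<close>

definition prod_mlat :: "nat \<Rightarrow> (nat \<Rightarrow> 'a mlat) \<Rightarrow> (nat \<Rightarrow> 'a) mlat" where
  "prod_mlat k Ls = \<lparr> carrier = (\<Pi>\<^sub>E i\<in>{..<k}. carrier (Ls i)),
     le = (\<lambda>f g. \<forall>i<k. le (Ls i) (f i) (g i)),
     mul = (\<lambda>f g. \<lambda>i. if i < k then mul (Ls i) (f i) (g i) else undefined) \<rparr>"

end

theory Submission
  imports Defs
begin

section \<open>Generic lattice facts\<close>

lemma cl_refl: "complete_lat L \<Longrightarrow> x \<in> carrier L \<Longrightarrow> le L x x"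
  unfolding complete_lat_def by blast
lemma cl_antisym: "complete_lat L \<Longrightarrow> x \<in> carrier L \<Longrightarrow> y \<in> carrier L \<Longrightarrow> le L x y \<Longrightarrow> le L y x \<Longrightarrow> x = y"
  unfolding complete_lat_def by blast
lemma cl_trans: "complete_lat L \<Longrightarrow> x \<in> carrier L \<Longrightarrow> y \<in> carrier L \<Longrightarrow> z \<in> carrier L \<Longrightarrow> le L x y \<Longrightarrow> le L y z \<Longrightarrow> le L x z"
  unfolding complete_lat_def by blast

lemma join_eq: assumes "complete_lat L" "is_join L S x" shows "join L S = x"
  unfolding join_def
proof (rule the_equality)
  show "is_join L S x" by fact
  fix y assume "is_join L S y"
  with assms show "y = x" unfolding is_join_def using cl_antisym[OF assms(1)] by blast
qed

lemma join_eq':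
  assumes anti: "\<And>x y. x \<in> carrier L \<Longrightarrow> y \<in> carrier L \<Longrightarrow> le L x y \<Longrightarrow> le L y x \<Longrightarrow> x = y"
    and j: "is_join L S x" shows "join L S = x"
  unfolding join_def
proof (rule the_equality)
  show "is_join L S x" by fact
  fix y assume "is_join L S y"
  with j show "y = x" unfolding is_join_def using anti by blast
qed

lemma join_is: assumes "complete_lat L" "S \<subseteq> carrier L" shows "is_join L S (join L S)"
proof -
  obtain x where "is_join L S x" using assms unfolding complete_lat_def by blast
  with join_eq[OF assms(1) this] show ?thesis by simp
qed

lemma join_in: "complete_lat L \<Longrightarrow> S \<subseteq> carrier L \<Longrightarrow> join L S \<in> carrier L"
  using join_is unfolding is_join_def by blast
lemma join_upper: "complete_lat L \<Longrightarrow> S \<subseteq> carrier L \<Longrightarrow> s \<in> S \<Longrightarrow> le L s (join L S)"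
  using join_is unfolding is_join_def by blast
lemma join_least: "complete_lat L \<Longrightarrow> S \<subseteq> carrier L \<Longrightarrow> y \<in> carrier L \<Longrightarrow> (\<And>s. s \<in> S \<Longrightarrow> le L s y) \<Longrightarrow> le L (join L S) y"
  using join_is unfolding is_join_def by blast

lemma join_mono: assumes "complete_lat L" "F \<subseteq> G" "G \<subseteq> carrier L"
  shows "le L (join L F) (join L G)"
  using assms by (intro join_least) (auto intro: join_upper join_in)

lemma top_in: "complete_lat L \<Longrightarrow> top_el L \<in> carrier L"
  unfolding top_el_def by (rule join_in) auto
lemma le_top: "complete_lat L \<Longrightarrow> x \<in> carrier L \<Longrightarrow> le L x (top_el L)"
  unfolding top_el_def by (rule join_upper) auto
lemma bot_in: "complete_lat L \<Longrightarrow> bot_el L \<in> carrier L"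
  unfolding bot_el_def by (rule join_in) auto
lemma bot_le: "complete_lat L \<Longrightarrow> x \<in> carrier L \<Longrightarrow> le L (bot_el L) x"
  unfolding bot_el_def by (rule join_least) auto

section \<open>Multiplicative lattices\<close>

lemma ml_cl: "mult_lattice L \<Longrightarrow> complete_lat L" unfolding mult_lattice_def by (elim conjE)
lemma ml_closed: assumes "mult_lattice L" "a \<in> carrier L" "b \<in> carrier L" shows "mul L a b \<in> carrier L"
proof -
  have "\<forall>a\<in>carrier L. \<forall>b\<in>carrier L. mul L a b \<in> carrier L" using assms(1) unfolding mult_lattice_def by (elim conjE)
  thus ?thesis using assms by blast
qed
lemma ml_comm: assumes "mult_lattice L" "a \<in> carrier L" "b \<in> carrier L" shows "mul L a b = mul L b a"
proof -
  have "\<forall>a\<in>carrier L. \<forall>b\<in>carrier L. mul L a b = mul L b a" using assms(1) unfolding mult_lattice_def by (elim conjE)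
  from bspec[OF bspec[OF this assms(2)] assms(3)] show ?thesis .
qed
lemma ml_assoc: assumes "mult_lattice L" "a \<in> carrier L" "b \<in> carrier L" "c \<in> carrier L" shows "mul L (mul L a b) c = mul L a (mul L b c)"
proof -
  have "\<forall>a\<in>carrier L. \<forall>b\<in>carrier L. \<forall>c\<in>carrier L. mul L (mul L a b) c = mul L a (mul L b c)" using assms(1) unfolding mult_lattice_def by (elim conjE)
  from bspec[OF bspec[OF bspec[OF this assms(2)] assms(3)] assms(4)] show ?thesis .
qed
lemma ml_distrib: assumes "mult_lattice L" "a \<in> carrier L" "S \<subseteq> carrier L" shows "mul L a (join L S) = join L (mul L a ` S)"
proof -
  have "\<forall>a\<in>carrier L. \<forall>S. S \<subseteq> carrier L \<longrightarrow> mul L a (join L S) = join L (mul L a ` S)" using assms(1) unfolding mult_lattice_def by (elim conjE)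
  thus ?thesis using assms(2,3) by blast
qed
lemma ml_topid: assumes "mult_lattice L" "a \<in> carrier L" shows "mul L (top_el L) a = a"
proof -
  have "\<forall>a\<in>carrier L. mul L (top_el L) a = a" using assms(1) unfolding mult_lattice_def by (elim conjE)
  from bspec[OF this assms(2)] show ?thesis .
qed
lemma ml_topc: "mult_lattice L \<Longrightarrow> compact L (top_el L)" unfolding mult_lattice_def by (elim conjE)

lemma ml_mono: assumes L: "mult_lattice L" and ab: "le L a b" and c: "a \<in> carrier L" "b \<in> carrier L" "c \<in> carrier L"
  shows "le L (mul L c a) (mul L c b)"
proof -
  have cl: "complete_lat L" using ml_cl[OF L] .
  have "is_join L {a,b} b" unfolding is_join_def
  proof (intro conjI ballI impI)
    show "b \<in> carrier L" by fact
    fix s assume "s \<in> {a,b}" thus "le L s b" using ab cl_refl[OF cl c(2)] by blast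
  next
    fix y assume "y \<in> carrier L" "\<forall>s\<in>{a,b}. le L s y" thus "le L b y" by blast
  qed
  hence j: "join L {a,b} = b" by (rule join_eq[OF cl])
  have ab2: "{a,b} \<subseteq> carrier L" using c by blast
  have "mul L c b = join L (mul L c ` {a,b})" using ml_distrib[OF L c(3) ab2] unfolding j .
  moreover have "le L (mul L c a) (join L (mul L c ` {a,b}))"
    using c by (intro join_upper[OF cl]) (auto intro: ml_closed[OF L])
  ultimately show ?thesis by (simp only:)
qed

lemma ml_multop: assumes "mult_lattice L" "x \<in> carrier L" shows "mul L x (top_el L) = x"
proof -
  have "mul L x (top_el L) = mul L (top_el L) x" by (rule ml_comm[OF assms(1,2) top_in[OF ml_cl[OF assms(1)]]])
  also have "\<dots> = x" by (rule ml_topid[OF assms])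
  finally show ?thesis .
qed

lemma ml_le_left: assumes L: "mult_lattice L" "x \<in> carrier L" "y \<in> carrier L"
  shows "le L (mul L x y) x"
  using ml_mono[OF L(1) le_top[OF ml_cl[OF L(1)] L(3)] L(3) top_in[OF ml_cl[OF L(1)]] L(2)]
    ml_multop[OF L(1,2)] by simp

lemma mpow_in: "mult_lattice L \<Longrightarrow> a \<in> carrier L \<Longrightarrow> mpow L a s \<in> carrier L"
  by (induction s) (auto intro: ml_closed top_in ml_cl)

lemma mpow_add: assumes L: "mult_lattice L" "a \<in> carrier L" "b \<in> carrier L"
  shows "mul L (mpow L a (i+j)) b = mul L (mpow L a i) (mul L (mpow L a j) b)"
proof (induction i)
  case 0
  have "mul L (mpow L a j) b \<in> carrier L" by (rule ml_closed[OF L(1) mpow_in[OF L(1,2)] L(3)])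
  hence "mul L (top_el L) (mul L (mpow L a j) b) = mul L (mpow L a j) b" by (rule ml_topid[OF L(1)])
  thus ?case by simp
next
  case (Suc i)
  have e1: "mul L (mul L a (mpow L a (i+j))) b = mul L a (mul L (mpow L a (i+j)) b)"
    by (rule ml_assoc[OF L(1) L(2) mpow_in[OF L(1,2)] L(3)])
  have e2: "mul L (mul L a (mpow L a i)) (mul L (mpow L a j) b) = mul L a (mul L (mpow L a i) (mul L (mpow L a j) b))"
    by (rule ml_assoc[OF L(1) L(2) mpow_in[OF L(1,2)] ml_closed[OF L(1) mpow_in[OF L(1,2)] L(3)]])
  show ?case using e1 e2 Suc by simp
qed

section \<open>Compactness in C-lattices\<close>

lemma compact_in: "compact L a \<Longrightarrow> a \<in> carrier L" unfolding compact_def by blast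

lemma fin_join_compact:
  assumes cl: "complete_lat L" and fin: "finite F" and cF: "\<And>f. f \<in> F \<Longrightarrow> compact L f"
  shows "compact L (join L F)"
proof -
  have Fc: "F \<subseteq> carrier L"
  proof
    fix f assume "f \<in> F" thus "f \<in> carrier L" by (rule compact_in[OF cF])
  qed
  show ?thesis unfolding compact_def
  proof (intro conjI allI impI)
    show "join L F \<in> carrier L" using join_in[OF cl Fc] .
    fix S assume S: "S \<subseteq> carrier L" and le: "le L (join L F) (join L S)"
    have "\<forall>f\<in>F. \<exists>G. G \<subseteq> S \<and> finite G \<and> le L f (join L G)"
    proof
      fix f assume f: "f \<in> F"
      have fc: "f \<in> carrier L" using f Fc by blast
      have "le L f (join L S)"
        by (rule cl_trans[OF cl fc join_in[OF cl Fc] join_in[OF cl S] join_upper[OF cl Fc f] le])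
      moreover have "\<forall>S. S \<subseteq> carrier L \<longrightarrow> le L f (join L S) \<longrightarrow> (\<exists>F. F \<subseteq> S \<and> finite F \<and> le L f (join L F))"
        using cF[OF f] unfolding compact_def by (elim conjE)
      ultimately show "\<exists>G. G \<subseteq> S \<and> finite G \<and> le L f (join L G)" using S by blast
    qed
    from bchoice[OF this] obtain g where g0: "\<forall>f\<in>F. g f \<subseteq> S \<and> finite (g f) \<and> le L f (join L (g f))"
      by (elim exE)
    have g: "\<And>f. f \<in> F \<Longrightarrow> g f \<subseteq> S \<and> finite (g f) \<and> le L f (join L (g f))"
      using g0 by (rule bspec)
    define G where "G = \<Union> (g ` F)"
    have GS: "G \<subseteq> S" unfolding G_def using g by blast
    have Gf: "finite G" unfolding G_def using g fin by simp
    have GC: "G \<subseteq> carrier L" using GS S by blast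
    have "le L (join L F) (join L G)"
    proof (rule join_least[OF cl Fc join_in[OF cl GC]])
      fix f assume f: "f \<in> F"
      have gc: "g f \<subseteq> carrier L" using g[OF f] S by blast
      have fc: "f \<in> carrier L" using f Fc by blast
      have sub: "g f \<subseteq> G" using f unfolding G_def by blast
      show "le L f (join L G)"
        by (rule cl_trans[OF cl fc join_in[OF cl gc] join_in[OF cl GC] _ join_mono[OF cl sub GC]])
           (use g[OF f] in blast)
    qed
    with GS Gf show "\<exists>H. H \<subseteq> S \<and> finite H \<and> le L (join L F) (join L H)" by blast
  qed
qed

lemma C_fin_join:
  assumes L: "mult_lattice L" and C: "C \<subseteq> carrier L" and gen: "\<forall>a\<in>carrier L. \<exists>S. S \<subseteq> C \<and> a = join L S"
    and a: "compact L a"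
  shows "\<exists>F. F \<subseteq> C \<and> finite F \<and> a = join L F"
proof -
  have cl: "complete_lat L" by (rule ml_cl[OF L])
  have ac: "a \<in> carrier L" by (rule compact_in[OF a])
  from bspec[OF gen ac] obtain S where S: "S \<subseteq> C" "a = join L S" by (elim exE conjE)
  have Sc: "S \<subseteq> carrier L" using S(1) C by (rule subset_trans)
  have "\<forall>S. S \<subseteq> carrier L \<longrightarrow> le L a (join L S) \<longrightarrow> (\<exists>F. F \<subseteq> S \<and> finite F \<and> le L a (join L F))"
    using a unfolding compact_def by (elim conjE)
  moreover have "le L a (join L S)" using cl_refl[OF cl ac] S(2) by simp
  ultimately obtain F where F: "F \<subseteq> S" "finite F" "le L a (join L F)" using Sc by blast
  have Fc: "F \<subseteq> carrier L" using F(1) Sc by (rule subset_trans)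
  have "le L (join L F) (join L S)" by (rule join_mono[OF cl F(1) Sc])
  hence "le L (join L F) a" using S(2) by simp
  hence "a = join L F" using cl_antisym[OF cl ac join_in[OF cl Fc] F(3)] by simp
  moreover have "F \<subseteq> C" using F(1) S(1) by (rule subset_trans)
  ultimately show ?thesis using F(2) by blast
qed

lemma mul_join:
  assumes L: "mult_lattice L" and F: "F \<subseteq> carrier L" and G: "G \<subseteq> carrier L"
  shows "mul L (join L F) (join L G) = join L ((\<lambda>(f,g). mul L f g) ` (F \<times> G))"
proof -
  have cl: "complete_lat L" by (rule ml_cl[OF L])
  define H where "H = (\<lambda>(f,g). mul L f g) ` (F \<times> G)"
  have jF: "join L F \<in> carrier L" by (rule join_in[OF cl F])
  have jG: "join L G \<in> carrier L" by (rule join_in[OF cl G])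
  have xc: "mul L (join L F) (join L G) \<in> carrier L" by (rule ml_closed[OF L jF jG])
  have "is_join L H (mul L (join L F) (join L G))" unfolding is_join_def
  proof (intro conjI ballI impI)
    show "mul L (join L F) (join L G) \<in> carrier L" by (rule xc)
  next
    fix h assume "h \<in> H"
    then obtain f g where fg: "f \<in> F" "g \<in> G" "h = mul L f g" unfolding H_def by auto
    have fc: "f \<in> carrier L" using fg(1) F by blast
    have gc: "g \<in> carrier L" using fg(2) G by blast
    have 1: "le L (mul L f g) (mul L f (join L G))"
      by (rule ml_mono[OF L join_upper[OF cl G fg(2)] gc jG fc])
    have 2: "le L (mul L (join L G) f) (mul L (join L G) (join L F))"
      by (rule ml_mono[OF L join_upper[OF cl F fg(1)] fc jF jG])
    have e1: "mul L f (join L G) = mul L (join L G) f" by (rule ml_comm[OF L fc jG])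
    have e2: "mul L (join L G) (join L F) = mul L (join L F) (join L G)" by (rule ml_comm[OF L jG jF])
    have "le L (mul L f g) (mul L (join L F) (join L G))"
      using cl_trans[OF cl ml_closed[OF L fc gc] ml_closed[OF L fc jG] xc 1] 2 e1 e2 by simp
    thus "le L h (mul L (join L F) (join L G))" using fg(3) by simp
  next
    fix y assume y: "y \<in> carrier L" and ub: "\<forall>h\<in>H. le L h y"
    have "mul L (join L F) (join L G) = join L (mul L (join L F) ` G)" by (rule ml_distrib[OF L jF G])
    moreover have "le L (join L (mul L (join L F) ` G)) y"
    proof (rule join_least[OF cl _ y])
      show "mul L (join L F) ` G \<subseteq> carrier L" using G ml_closed[OF L jF] by blast
      fix s assume "s \<in> mul L (join L F) ` G"
      then obtain g where g: "g \<in> G" "s = mul L (join L F) g" by blast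
      have gc: "g \<in> carrier L" using g(1) G by blast
      have "s = mul L g (join L F)" using g(2) ml_comm[OF L jF gc] by simp
      also have "\<dots> = join L (mul L g ` F)" by (rule ml_distrib[OF L gc F])
      finally have s: "s = join L (mul L g ` F)" .
      have "le L (join L (mul L g ` F)) y"
      proof (rule join_least[OF cl _ y])
        show "mul L g ` F \<subseteq> carrier L" using F ml_closed[OF L gc] by blast
        fix t assume "t \<in> mul L g ` F"
        then obtain f where f: "f \<in> F" "t = mul L g f" by blast
        have fc: "f \<in> carrier L" using f(1) F by blast
        have "mul L f g \<in> H" unfolding H_def using f(1) g(1) by force
        hence "le L (mul L f g) y" using ub by blast
        thus "le L t y" using f(2) ml_comm[OF L fc gc] by simp
      qed
      thus "le L s y" using s by simp
    qed
    ultimately show "le L (mul L (join L F) (join L G)) y" by simp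
  qed
  from join_eq[OF cl this] show ?thesis unfolding H_def by simp
qed

lemma compact_mul:
  assumes L: "C_lattice L" and a: "compact L a" and b: "compact L b"
  shows "compact L (mul L a b)"
proof -
  have ml: "mult_lattice L" using L unfolding C_lattice_def by (elim conjE)
  have cl: "complete_lat L" by (rule ml_cl[OF ml])
  obtain C where C: "C \<subseteq> carrier L" "\<forall>c\<in>C. compact L c" "\<forall>c\<in>C. \<forall>d\<in>C. mul L c d \<in> C"
      "\<forall>a\<in>carrier L. \<exists>S. S \<subseteq> C \<and> a = join L S"
    using L unfolding C_lattice_def by (elim conjE exE) 
  obtain F where F: "F \<subseteq> C" "finite F" "a = join L F" using C_fin_join[OF ml C(1) C(4) a] by (elim exE conjE)
  obtain G where G: "G \<subseteq> C" "finite G" "b = join L G" using C_fin_join[OF ml C(1) C(4) b] by (elim exE conjE)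
  have Fc: "F \<subseteq> carrier L" using F(1) C(1) by (rule subset_trans)
  have Gc: "G \<subseteq> carrier L" using G(1) C(1) by (rule subset_trans)
  have e: "mul L a b = join L ((\<lambda>(f,g). mul L f g) ` (F \<times> G))"
    using mul_join[OF ml Fc Gc] F(3) G(3) by simp
  have "compact L (join L ((\<lambda>(f,g). mul L f g) ` (F \<times> G)))"
  proof (rule fin_join_compact[OF cl])
    show "finite ((\<lambda>(f,g). mul L f g) ` (F \<times> G))" using F(2) G(2) by simp
    fix h assume "h \<in> (\<lambda>(f,g). mul L f g) ` (F \<times> G)"
    then obtain f g where fg: "f \<in> F" "g \<in> G" "h = mul L f g" by auto
    have "f \<in> C" "g \<in> C" using fg F(1) G(1) by blast+
    hence "mul L f g \<in> C" using C(3) by blast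
    thus "compact L h" using fg(3) bspec[OF C(2)] by simp
  qed
  thus ?thesis using e by simp
qed

lemma mpow_compact:
  assumes L: "C_lattice L" and a: "compact L a" shows "compact L (mpow L a s)"
proof (induction s)
  case 0
  have ml: "mult_lattice L" using L unfolding C_lattice_def by (elim conjE)
  show ?case using ml_topc[OF ml] by simp
next
  case (Suc s) thus ?case using compact_mul[OF L a] by simp
qed

lemma key:
  assumes L: "C_lattice L" and q: "quasi_absorbing L t q" and a: "compact L a" and b: "compact L b"
    and tN: "t \<le> N" and h: "le L (mul L (mpow L a (Suc N)) b) q"
  shows "le L (mul L (mpow L a N) b) q"
proof -
  have ml: "mult_lattice L" using L unfolding C_lattice_def by (elim conjE)
  have cl: "complete_lat L" by (rule ml_cl[OF ml])
  have t0: "0 < t" using q unfolding quasi_absorbing_def by (elim conjE)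
  have qc: "q \<in> carrier L" using q unfolding quasi_absorbing_def by (elim conjE)
  have QA: "\<forall>a b. compact L a \<longrightarrow> compact L b \<longrightarrow>
        le L (mul L (mpow L a t) b) q \<longrightarrow>
        le L (mpow L a t) q \<or> le L (mul L (mpow L a (t - 1)) b) q"
    using q unfolding quasi_absorbing_def by (elim conjE)
  have ac: "a \<in> carrier L" by (rule compact_in[OF a])
  have bc: "b \<in> carrier L" by (rule compact_in[OF b])
  define c where "c = mul L (mpow L a (Suc N - t)) b"
  have cc: "compact L c" unfolding c_def by (rule compact_mul[OF L mpow_compact[OF L a] b])
  have "mul L (mpow L a (t + (Suc N - t))) b = mul L (mpow L a t) c"
    unfolding c_def by (rule mpow_add[OF ml ac bc])
  moreover have "t + (Suc N - t) = Suc N" using tN by simp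
  ultimately have "le L (mul L (mpow L a t) c) q" using h by simp
  hence disj: "le L (mpow L a t) q \<or> le L (mul L (mpow L a (t - 1)) c) q"
    using QA a cc by blast
  show ?thesis
  proof (cases "le L (mpow L a t) q")
    case True
    have "mul L (mpow L a (t + (N - t))) b = mul L (mpow L a t) (mul L (mpow L a (N - t)) b)"
      by (rule mpow_add[OF ml ac bc])
    moreover have "t + (N - t) = N" using tN by simp
    ultimately have e: "mul L (mpow L a N) b = mul L (mpow L a t) (mul L (mpow L a (N - t)) b)" by simp
    have "le L (mul L (mpow L a t) (mul L (mpow L a (N - t)) b)) (mpow L a t)"
      by (rule ml_le_left[OF ml mpow_in[OF ml ac] ml_closed[OF ml mpow_in[OF ml ac] bc]])
    hence "le L (mul L (mpow L a N) b) (mpow L a t)" using e by simp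
    thus ?thesis using cl_trans[OF cl ml_closed[OF ml mpow_in[OF ml ac] bc] mpow_in[OF ml ac] qc] True by blast
  next
    case False
    hence "le L (mul L (mpow L a (t - 1)) c) q" using disj by blast
    moreover have "mul L (mpow L a (t - 1 + (Suc N - t))) b = mul L (mpow L a (t - 1)) c"
      unfolding c_def by (rule mpow_add[OF ml ac bc])
    moreover have "t - 1 + (Suc N - t) = N" using tN t0 by simp
    ultimately show ?thesis by simp
  qed
qed

section \<open>Products\<close>

lemma prod_carrier: "carrier (prod_mlat k Ls) = (\<Pi>\<^sub>E i\<in>{..<k}. carrier (Ls i))"
  by (simp add: prod_mlat_def)
lemma prod_le: "le (prod_mlat k Ls) f g = (\<forall>i<k. le (Ls i) (f i) (g i))"
  by (simp add: prod_mlat_def)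
lemma prod_mul: "mul (prod_mlat k Ls) f g = (\<lambda>i. if i < k then mul (Ls i) (f i) (g i) else undefined)"
  by (simp add: prod_mlat_def)

lemma prod_join:
  assumes cl: "\<And>i. i < k \<Longrightarrow> complete_lat (Ls i)" and S: "S \<subseteq> carrier (prod_mlat k Ls)"
  shows "join (prod_mlat k Ls) S = (\<lambda>i\<in>{..<k}. join (Ls i) ((\<lambda>f. f i) ` S))"
proof -
  let ?P = "prod_mlat k Ls"
  let ?x = "(\<lambda>i\<in>{..<k}. join (Ls i) ((\<lambda>f. f i) ` S))"
  have Si: "(\<lambda>f. f i) ` S \<subseteq> carrier (Ls i)" if i: "i < k" for i
    using S i unfolding prod_carrier by (auto intro: PiE_mem)
  have isj: "is_join ?P S ?x" unfolding is_join_def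
  proof (intro conjI ballI impI)
    show "?x \<in> carrier ?P" unfolding prod_carrier using join_in[OF cl Si] by simp
  next
    fix s assume s: "s \<in> S"
    show "le ?P s ?x" unfolding prod_le
    proof (intro allI impI)
      fix i assume i: "i < k"
      have "le (Ls i) (s i) (join (Ls i) ((\<lambda>f. f i) ` S))"
        by (rule join_upper[OF cl[OF i] Si[OF i]]) (use s in blast)
      thus "le (Ls i) (s i) (?x i)" using i by simp
    qed
  next
    fix y assume y: "y \<in> carrier ?P" and ub: "\<forall>s\<in>S. le ?P s y"
    show "le ?P ?x y" unfolding prod_le
    proof (intro allI impI)
      fix i assume i: "i < k"
      have yi: "y i \<in> carrier (Ls i)" using y i unfolding prod_carrier by (auto intro: PiE_mem)
      have "le (Ls i) (join (Ls i) ((\<lambda>f. f i) ` S)) (y i)"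
      proof (rule join_least[OF cl[OF i] Si[OF i] yi])
        fix t assume "t \<in> (\<lambda>f. f i) ` S"
        then obtain s where "s \<in> S" "t = s i" by blast
        thus "le (Ls i) t (y i)" using ub i unfolding prod_le by blast
      qed
      thus "le (Ls i) (?x i) (y i)" using i by simp
    qed
  qed
  have anti: "x = y" if zc: "x \<in> carrier ?P" and xc: "y \<in> carrier ?P" and l1: "le ?P x y" and l2: "le ?P y x" for x y
  proof (rule PiE_ext)
    show "x \<in> (\<Pi>\<^sub>E i\<in>{..<k}. carrier (Ls i))" using zc unfolding prod_carrier .
    show "y \<in> (\<Pi>\<^sub>E i\<in>{..<k}. carrier (Ls i))" using xc unfolding prod_carrier .
    fix i assume "i \<in> {..<k}"
    hence i: "i < k" by simp
    have "x i \<in> carrier (Ls i)" "y i \<in> carrier (Ls i)"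
      using zc xc i unfolding prod_carrier by (auto intro: PiE_mem)
    moreover have "le (Ls i) (x i) (y i)" "le (Ls i) (y i) (x i)" using l1 l2 i unfolding prod_le by blast+
    ultimately show "x i = y i" using cl_antisym[OF cl[OF i]] by blast
  qed
  show ?thesis by (rule join_eq'[OF anti isj])
qed

lemma prod_top:
  assumes cl: "\<And>i. i < k \<Longrightarrow> complete_lat (Ls i)"
  shows "top_el (prod_mlat k Ls) = (\<lambda>i\<in>{..<k}. top_el (Ls i))"
proof -
  have bc: "(\<lambda>j\<in>{..<k}. bot_el (Ls j)) \<in> carrier (prod_mlat k Ls)"
    unfolding prod_carrier using bot_in[OF cl] by simp
  have proj: "(\<lambda>f. f i) ` carrier (prod_mlat k Ls) = carrier (Ls i)" if i: "i < k" for i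
  proof
    show "(\<lambda>f. f i) ` carrier (prod_mlat k Ls) \<subseteq> carrier (Ls i)"
      using i unfolding prod_carrier by (auto intro: PiE_mem)
    show "carrier (Ls i) \<subseteq> (\<lambda>f. f i) ` carrier (prod_mlat k Ls)"
    proof
      fix x assume x: "x \<in> carrier (Ls i)"
      let ?g = "(\<lambda>j\<in>{..<k}. bot_el (Ls j))(i := x)"
      have "?g \<in> (\<Pi>\<^sub>E j\<in>insert i {..<k}. carrier (Ls j))"
        by (rule PiE_fun_upd[where T="\<lambda>j. carrier (Ls j)", OF x]) (use bc in \<open>simp add: prod_carrier\<close>)
      moreover have "insert i {..<k} = {..<k}" using i by auto
      ultimately have "?g \<in> carrier (prod_mlat k Ls)" unfolding prod_carrier by simp
      moreover have "?g i = x" by simp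
      ultimately show "x \<in> (\<lambda>f. f i) ` carrier (prod_mlat k Ls)" by (metis image_eqI)
    qed
  qed
  have "top_el (prod_mlat k Ls) = (\<lambda>i\<in>{..<k}. join (Ls i) ((\<lambda>f. f i) ` carrier (prod_mlat k Ls)))"
    unfolding top_el_def by (rule prod_join[OF cl subset_refl])
  also have "\<dots> = (\<lambda>i\<in>{..<k}. top_el (Ls i))"
    by (rule restrict_ext) (simp add: proj top_el_def)
  finally show ?thesis .
qed

lemma prod_mpow:
  assumes cl: "\<And>i. i < k \<Longrightarrow> complete_lat (Ls i)"
  shows "mpow (prod_mlat k Ls) a s = (\<lambda>i\<in>{..<k}. mpow (Ls i) (a i) s)"
proof (induction s)
  case 0 thus ?case using prod_top[OF cl] by simp
next
  case (Suc s) thus ?case by (simp add: prod_mul restrict_def fun_eq_iff)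
qed

lemma prod_compact:
  assumes cl: "\<And>i. i < k \<Longrightarrow> complete_lat (Ls i)" and a: "compact (prod_mlat k Ls) a" and i: "i < k"
  shows "compact (Ls i) (a i)"
proof -
  let ?P = "prod_mlat k Ls"
  have aP: "a \<in> carrier ?P" by (rule compact_in[OF a])
  have aj: "a j \<in> carrier (Ls j)" if "j < k" for j using aP that unfolding prod_carrier by (auto intro: PiE_mem)
  have CP: "\<forall>S. S \<subseteq> carrier ?P \<longrightarrow> le ?P a (join ?P S) \<longrightarrow> (\<exists>F. F \<subseteq> S \<and> finite F \<and> le ?P a (join ?P F))"
    using a unfolding compact_def by (elim conjE)
  have upd: "a(i := s) \<in> carrier ?P" if s: "s \<in> carrier (Ls i)" for s
  proof -
    have "a(i := s) \<in> (\<Pi>\<^sub>E j\<in>insert i {..<k}. carrier (Ls j))"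
      by (rule PiE_fun_upd[where T="\<lambda>j. carrier (Ls j)", OF s]) (use aP in \<open>simp add: prod_carrier\<close>)
    moreover have "insert i {..<k} = {..<k}" using i by auto
    ultimately show ?thesis unfolding prod_carrier by simp
  qed
  show ?thesis unfolding compact_def
  proof (intro conjI allI impI)
    show "a i \<in> carrier (Ls i)" by (rule aj[OF i])
    fix S assume S: "S \<subseteq> carrier (Ls i)" and le: "le (Ls i) (a i) (join (Ls i) S)"
    define T where "T = insert (bot_el (Ls i)) S"
    have TC: "T \<subseteq> carrier (Ls i)" unfolding T_def using S bot_in[OF cl[OF i]] by blast
    define S' where "S' = (\<lambda>s. a(i := s)) ` T"
    have S'C: "S' \<subseteq> carrier ?P" unfolding S'_def using TC upd by blast
    have jS': "join ?P S' = (\<lambda>j\<in>{..<k}. join (Ls j) ((\<lambda>f. f j) ` S'))" by (rule prod_join[OF cl S'C])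
    have projS: "(\<lambda>f. f j) ` S' \<subseteq> carrier (Ls j)" if "j < k" for j
      using S'C that unfolding prod_carrier by (auto intro: PiE_mem)
    have "le ?P a (join ?P S')" unfolding prod_le
    proof (intro allI impI)
      fix j assume j: "j < k"
      show "le (Ls j) (a j) (join ?P S' j)"
      proof (cases "j = i")
        case True
        have pi: "(\<lambda>f. f i) ` S' = T" unfolding S'_def by (simp add: image_image)
        have "le (Ls i) (join (Ls i) S) (join (Ls i) T)"
          by (rule join_mono[OF cl[OF i] _ TC]) (auto simp: T_def)
        hence "le (Ls i) (a i) (join (Ls i) T)"
          using cl_trans[OF cl[OF i] aj[OF i] join_in[OF cl[OF i] S] join_in[OF cl[OF i] TC] le] by blast
        thus ?thesis using True jS' pi i by simp
      next
        case False
        have "a j \<in> (\<lambda>f. f j) ` S'" unfolding S'_def T_def using False by force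
        hence "le (Ls j) (a j) (join (Ls j) ((\<lambda>f. f j) ` S'))" by (rule join_upper[OF cl[OF j] projS[OF j]])
        thus ?thesis using jS' j by simp
      qed
    qed
    then obtain F' where F': "F' \<subseteq> S'" "finite F'" "le ?P a (join ?P F')" using CP S'C by blast
    obtain F0 where F0: "F0 \<subseteq> T" "finite F0" "F' = (\<lambda>s. a(i := s)) ` F0"
      using finite_subset_image[OF F'(2) F'(1)[unfolded S'_def]] by blast
    have F'C: "F' \<subseteq> carrier ?P" using F'(1) S'C by blast
    have F0C: "F0 \<subseteq> carrier (Ls i)" using F0(1) TC by blast
    have "le (Ls i) (a i) (join ?P F' i)" using F'(3) i unfolding prod_le by blast
    moreover have "join ?P F' i = join (Ls i) F0"
      using prod_join[OF cl F'C] i F0(3) by (simp add: image_image)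
    ultimately have l1: "le (Ls i) (a i) (join (Ls i) F0)" by simp
    define F where "F = F0 \<inter> S"
    have FS: "F \<subseteq> S" and Ff: "finite F" using F0(2) unfolding F_def by auto
    have FC: "F \<subseteq> carrier (Ls i)" using FS S by blast
    have l2: "le (Ls i) (join (Ls i) F0) (join (Ls i) F)"
    proof (rule join_least[OF cl[OF i] F0C join_in[OF cl[OF i] FC]])
      fix s assume s: "s \<in> F0"
      show "le (Ls i) s (join (Ls i) F)"
      proof (cases "s \<in> S")
        case True
        hence "s \<in> F" using s unfolding F_def by blast
        thus ?thesis by (rule join_upper[OF cl[OF i] FC])
      next
        case False
        hence "s = bot_el (Ls i)" using s F0(1) unfolding T_def by blast
        thus ?thesis using bot_le[OF cl[OF i] join_in[OF cl[OF i] FC]] by simp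
      qed
    qed
    have "le (Ls i) (a i) (join (Ls i) F)"
      by (rule cl_trans[OF cl[OF i] aj[OF i] join_in[OF cl[OF i] F0C] join_in[OF cl[OF i] FC] l1 l2])
    thus "\<exists>F. F \<subseteq> S \<and> finite F \<and> le (Ls i) (a i) (join (Ls i) F)" using FS Ff by blast
  qed
qed

theorem mainTheorem13:
  fixes Ls :: "nat \<Rightarrow> 'a mlat" and k :: nat and n :: "nat \<Rightarrow> nat" and q :: "nat \<Rightarrow> 'a"
  assumes "1 \<le> k"
    and "\<And>i. i < k \<Longrightarrow> C_lattice (Ls i)"
    and "\<And>i. i < k \<Longrightarrow> quasi_absorbing (Ls i) (n i) (q i)"
  shows "quasi_absorbing (prod_mlat k Ls) (Max (n ` {..<k}) + 1) (restrict q {..<k})"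
proof -
  let ?P = "prod_mlat k Ls"
  define N where "N = Max (n ` {..<k})"
  have ml: "mult_lattice (Ls i)" if "i < k" for i using assms(2)[OF that] unfolding C_lattice_def by (elim conjE)
  have cl: "complete_lat (Ls i)" if "i < k" for i by (rule ml_cl[OF ml[OF that]])
  have qc: "q i \<in> carrier (Ls i)" if "i < k" for i using assms(3)[OF that] unfolding quasi_absorbing_def by (elim conjE)
  have qt: "q i \<noteq> top_el (Ls i)" if "i < k" for i using assms(3)[OF that] unfolding quasi_absorbing_def by (elim conjE)
  have nN: "n i \<le> N" if "i < k" for i unfolding N_def by (rule Max_ge) (use that in auto)
  have "restrict q {..<k} \<in> carrier ?P" unfolding prod_carrier using qc by simp
  moreover have "restrict q {..<k} \<noteq> top_el ?P"
  proof
    assume "restrict q {..<k} = top_el ?P"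
    hence "restrict q {..<k} 0 = top_el ?P 0" by simp
    hence "q 0 = top_el (Ls 0)" using prod_top[OF cl] assms(1) by simp
    thus False using qt assms(1) by simp
  qed
  moreover have "\<forall>a b. compact ?P a \<longrightarrow> compact ?P b \<longrightarrow>
        le ?P (mul ?P (mpow ?P a (N + 1)) b) (restrict q {..<k}) \<longrightarrow>
        le ?P (mpow ?P a (N + 1)) (restrict q {..<k}) \<or> le ?P (mul ?P (mpow ?P a (N + 1 - 1)) b) (restrict q {..<k})"
  proof (intro allI impI disjI2)
    fix a b assume a: "compact ?P a" and b: "compact ?P b"
      and h: "le ?P (mul ?P (mpow ?P a (N + 1)) b) (restrict q {..<k})"
    show "le ?P (mul ?P (mpow ?P a (N + 1 - 1)) b) (restrict q {..<k})" unfolding prod_le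
    proof (intro allI impI)
      fix i assume i: "i < k"
      have hi: "le (Ls i) (mul (Ls i) (mpow (Ls i) (a i) (Suc N)) (b i)) (q i)"
        using h i unfolding prod_le by (simp add: prod_mul prod_mpow[OF cl])
      have "le (Ls i) (mul (Ls i) (mpow (Ls i) (a i) N) (b i)) (q i)"
        by (rule key[OF assms(2)[OF i] assms(3)[OF i] prod_compact[OF cl a i] prod_compact[OF cl b i] nN[OF i] hi])
      thus "le (Ls i) (mul ?P (mpow ?P a (N + 1 - 1)) b i) (restrict q {..<k} i)"
        using i by (simp add: prod_mul prod_mpow[OF cl])
    qed
  qed
  ultimately show ?thesis unfolding quasi_absorbing_def N_def[symmetric] by simp
qed

end
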